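(* Let $\mathcal{C}$ be a Fraïssé class of rigid finite structures over a finite relational language with Fraïssé limit $M$, and let $A_0\in\mathcal{C}$ be a $2$-element structure. Let $D$ be a directed graph on the domain of $M$ defined by a parameter-free first-order formula $\varphi(x,y)$ such that for every pair $\{x,y\}$ of distinct elements inducing a copy of $A_0$ exactly one of $\varphi(x,y),\varphi(y,x)$ holds, and $D$ has no other arcs. If $D$ contains a directed cycle, then with $A=A_0$ and $B$ the substructure of $M$ induced on the vertex set of that cycle, for every $C\in\mathcal{C}$ there is a $2$-colouring of the embeddings $A\to C$ with no monochromatic embedding $B\to C$; in particular $\mathcal{C}$ is not a Ramsey class.
   Context: A Fraïssé class is a class of finite non-empty structures closed under isomorphism and induced substructures with the joint embedding and amalgamation properties; its Fraïssé limit is the unique countable homogeneous structure whose age is the class. Rigid: trivial automorphism group. Since members of $\mathcal{C}$ embed in $M$ and $\varphi$ is preserved by isomorphisms between finite substructures (by homogeneity), $\varphi$ determines a direction on each copy of $A_0$ in any $C\in\mathcal{C}$. An embedding $g:B\to C$ is monochromatic for a colouring of embeddings $A\to C$ if all embeddings $A\to C$ with image inside $g(B)$ have the same colour. Ramsey class: for all $A,B$ in the class there is $C$ such that every $2$-colouring of embeddings $A\to C$ admits a monochromatic embedding $B\to C$. *)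

theory Defs
  imports "HOL-Library.FuncSet"
begin

text \<open>Relational structures with universe a subset of nat (all structures considered are
countable). A structure is a domain together with an interpretation of relation symbols
as sets of tuples (lists).\<close>

type_synonym 'r struc = "nat set \<times> ('r \<Rightarrow> nat list set)"

definition sdom :: "'r struc \<Rightarrow> nat set" where
  "sdom S = fst S"

definition rel :: "'r struc \<Rightarrow> 'r \<Rightarrow> nat list set" where
  "rel S = snd S"

definition is_struc :: "'r set \<Rightarrow> ('r \<Rightarrow> nat) \<Rightarrow> 'r struc \<Rightarrow> bool" where
  "is_struc L ar S \<longleftrightarrow>
     (\<forall>r. \<forall>t \<in> rel S r. r \<in> L \<and> length t = ar r \<and> set t \<subseteq> sdom S)"

definition induced :: "'r struc \<Rightarrow> nat set \<Rightarrow> 'r struc" where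
  "induced S X = (X, \<lambda>r. {t \<in> rel S r. set t \<subseteq> X})"

text \<open>Embeddings (taken extensional, so that embeddings are identified with their
restriction to the domain).\<close>
definition is_emb :: "'r struc \<Rightarrow> 'r struc \<Rightarrow> (nat \<Rightarrow> nat) \<Rightarrow> bool" where
  "is_emb A B f \<longleftrightarrow> f \<in> extensional (sdom A) \<and> inj_on f (sdom A) \<and> f ` sdom A \<subseteq> sdom B \<and>
     (\<forall>r t. set t \<subseteq> sdom A \<longrightarrow> (t \<in> rel A r \<longleftrightarrow> map f t \<in> rel B r))"

definition is_iso :: "'r struc \<Rightarrow> 'r struc \<Rightarrow> (nat \<Rightarrow> nat) \<Rightarrow> bool" where
  "is_iso A B f \<longleftrightarrow> is_emb A B f \<and> f ` sdom A = sdom B"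

definition isomorphic :: "'r struc \<Rightarrow> 'r struc \<Rightarrow> bool" where
  "isomorphic A B \<longleftrightarrow> (\<exists>f. is_iso A B f)"

definition rigid :: "'r struc \<Rightarrow> bool" where
  "rigid S \<longleftrightarrow> (\<forall>f. is_iso S S f \<longrightarrow> (\<forall>x \<in> sdom S. f x = x))"

definition fin_ne :: "'r struc \<Rightarrow> bool" where
  "fin_ne S \<longleftrightarrow> finite (sdom S) \<and> sdom S \<noteq> {}"

definition fraisse_class :: "'r set \<Rightarrow> ('r \<Rightarrow> nat) \<Rightarrow> 'r struc set \<Rightarrow> bool" where
  "fraisse_class L ar K \<longleftrightarrow>
     K \<noteq> {} \<and>
     (\<forall>S \<in> K. is_struc L ar S \<and> fin_ne S) \<and>
     (\<forall>S \<in> K. \<forall>T. is_struc L ar T \<and> isomorphic S T \<longrightarrow> T \<in> K) \<and>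
     (\<forall>S \<in> K. \<forall>X. X \<subseteq> sdom S \<and> X \<noteq> {} \<longrightarrow> induced S X \<in> K) \<and>
     (\<forall>A \<in> K. \<forall>B \<in> K. \<exists>C \<in> K. \<exists>f g. is_emb A C f \<and> is_emb B C g) \<and>
     (\<forall>A \<in> K. \<forall>B \<in> K. \<forall>C \<in> K. \<forall>f g. is_emb A B f \<and> is_emb A C g \<longrightarrow>
        (\<exists>D \<in> K. \<exists>f' g'. is_emb B D f' \<and> is_emb C D g' \<and>
            (\<forall>x \<in> sdom A. f' (f x) = g' (g x))))"

definition age :: "'r set \<Rightarrow> ('r \<Rightarrow> nat) \<Rightarrow> 'r struc \<Rightarrow> 'r struc set" where
  "age L ar M = {S. is_struc L ar S \<and> fin_ne S \<and>
     (\<exists>X. X \<subseteq> sdom M \<and> finite X \<and> X \<noteq> {} \<and> isomorphic S (induced M X))}"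

definition homogeneous :: "'r struc \<Rightarrow> bool" where
  "homogeneous M \<longleftrightarrow>
     (\<forall>X Y f. finite X \<and> finite Y \<and> X \<subseteq> sdom M \<and> Y \<subseteq> sdom M \<and>
        is_iso (induced M X) (induced M Y) f \<longrightarrow>
        (\<exists>g. is_iso M M g \<and> (\<forall>x \<in> X. g x = f x)))"

definition fraisse_limit :: "'r set \<Rightarrow> ('r \<Rightarrow> nat) \<Rightarrow> 'r struc set \<Rightarrow> 'r struc \<Rightarrow> bool" where
  "fraisse_limit L ar K M \<longleftrightarrow> is_struc L ar M \<and> homogeneous M \<and> age L ar M = K"

datatype 'r fm = Eq nat nat | Rel 'r "nat list" | Neg "'r fm" | Conj "'r fm" "'r fm"
  | Ex nat "'r fm"

fun sat :: "'r struc \<Rightarrow> (nat \<Rightarrow> nat) \<Rightarrow> 'r fm \<Rightarrow> bool" where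
  "sat S v (Eq i j) = (v i = v j)"
| "sat S v (Rel r is) = (map v is \<in> rel S r)"
| "sat S v (Neg \<phi>) = (\<not> sat S v \<phi>)"
| "sat S v (Conj \<phi> \<psi>) = (sat S v \<phi> \<and> sat S v \<psi>)"
| "sat S v (Ex i \<phi>) = (\<exists>a \<in> sdom S. sat S (v(i := a)) \<phi>)"

fun fv :: "'r fm \<Rightarrow> nat set" where
  "fv (Eq i j) = {i, j}"
| "fv (Rel r is) = set is"
| "fv (Neg \<phi>) = fv \<phi>"
| "fv (Conj \<phi> \<psi>) = fv \<phi> \<union> fv \<psi>"
| "fv (Ex i \<phi>) = fv \<phi> - {i}"

fun in_lang :: "'r set \<Rightarrow> ('r \<Rightarrow> nat) \<Rightarrow> 'r fm \<Rightarrow> bool" where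
  "in_lang L ar (Eq i j) = True"
| "in_lang L ar (Rel r is) = (r \<in> L \<and> length is = ar r)"
| "in_lang L ar (Neg \<phi>) = in_lang L ar \<phi>"
| "in_lang L ar (Conj \<phi> \<psi>) = (in_lang L ar \<phi> \<and> in_lang L ar \<psi>)"
| "in_lang L ar (Ex i \<phi>) = in_lang L ar \<phi>"

definition arcs :: "'r struc \<Rightarrow> 'r fm \<Rightarrow> (nat \<times> nat) set" where
  "arcs M \<phi> = {(x, y). x \<in> sdom M \<and> y \<in> sdom M \<and> sat M (\<lambda>i. if i = 0 then x else y) \<phi>}"

definition monochromatic ::
  "((nat \<Rightarrow> nat) \<Rightarrow> bool) \<Rightarrow> 'r struc \<Rightarrow> 'r struc \<Rightarrow> 'r struc \<Rightarrow> (nat \<Rightarrow> nat) \<Rightarrow> bool" where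
  "monochromatic col A B C g \<longleftrightarrow>
     (\<forall>f1 f2. is_emb A C f1 \<and> is_emb A C f2 \<and> f1 ` sdom A \<subseteq> g ` sdom B \<and>
        f2 ` sdom A \<subseteq> g ` sdom B \<longrightarrow> col f1 = col f2)"

definition ramsey_class :: "'r struc set \<Rightarrow> bool" where
  "ramsey_class K \<longleftrightarrow>
     (\<forall>A \<in> K. \<forall>B \<in> K. \<exists>C \<in> K. \<forall>col :: (nat \<Rightarrow> nat) \<Rightarrow> bool.
        \<exists>g. is_emb B C g \<and> monochromatic col A B C g)"

end

theory Submission
  imports Defs
begin


lemma sdom_induced[simp]: "sdom (induced S X) = X"
  by (simp add: sdom_def induced_def)

lemma rel_induced[simp]: "rel (induced S X) r = {t \<in> rel S r. set t \<subseteq> X}"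
  by (simp add: rel_def induced_def)

lemma emb_comp:
  assumes "is_emb A B f" "is_emb B C g"
  shows "is_emb A C (restrict (g \<circ> f) (sdom A))"
proof -
  have inj: "inj_on f (sdom A)" "inj_on g (sdom B)" and im: "f ` sdom A \<subseteq> sdom B" "g ` sdom B \<subseteq> sdom C"
    using assms by (auto simp: is_emb_def)
  have "inj_on (g \<circ> f) (sdom A)"
    using inj im by (meson comp_inj_on inj_on_subset)
  then have i2: "inj_on (restrict (g \<circ> f) (sdom A)) (sdom A)"
    by (simp add: inj_on_def)
  have rl: "t \<in> rel A r \<longleftrightarrow> map (restrict (g \<circ> f) (sdom A)) t \<in> rel C r"
    if "set t \<subseteq> sdom A" for r t
  proof -
    have m: "map (restrict (g \<circ> f) (sdom A)) t = map g (map f t)"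
      using that by (auto intro!: map_cong)
    have "set (map f t) \<subseteq> sdom B" using that im by auto
    then show ?thesis unfolding m using assms that by (auto simp: is_emb_def)
  qed
  show ?thesis unfolding is_emb_def using i2 im rl by auto
qed

lemma iso_comp:
  assumes "is_iso A B f" "is_iso B C g"
  shows "is_iso A C (restrict (g \<circ> f) (sdom A))"
proof -
  have "is_emb A C (restrict (g \<circ> f) (sdom A))"
    by (rule emb_comp[OF assms(1)[unfolded is_iso_def, THEN conjunct1] assms(2)[unfolded is_iso_def, THEN conjunct1]])
  moreover have "restrict (g \<circ> f) (sdom A) ` sdom A = sdom C"
  proof -
    have fA: "f ` sdom A = sdom B" by (rule assms(1)[unfolded is_iso_def, THEN conjunct2])
    have gB: "g ` sdom B = sdom C" by (rule assms(2)[unfolded is_iso_def, THEN conjunct2])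
    have "restrict (g \<circ> f) (sdom A) ` sdom A = (g \<circ> f) ` sdom A"
      by (rule image_cong) simp_all
    also have "\<dots> = g ` (f ` sdom A)" by (rule image_comp[symmetric])
    finally show ?thesis using fA gB by simp
  qed
  ultimately show ?thesis unfolding is_iso_def by (rule conjI)
qed

lemma iso_inv:
  assumes "is_iso A B f"
  shows "is_iso B A (restrict (inv_into (sdom A) f) (sdom B))"
proof -
  have bij: "bij_betw f (sdom A) (sdom B)"
    using assms by (auto simp: is_iso_def is_emb_def bij_betw_def)
  then have bij2: "bij_betw (inv_into (sdom A) f) (sdom B) (sdom A)"
    by (rule bij_betw_inv_into)
  have i2: "inj_on (restrict (inv_into (sdom A) f) (sdom B)) (sdom B)"
    using bij2 by (simp add: inj_on_def bij_betw_def)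
  have im: "restrict (inv_into (sdom A) f) (sdom B) ` sdom B = sdom A"
    using bij2 by (auto simp: bij_betw_def)
  have rl: "t \<in> rel B r \<longleftrightarrow> map (restrict (inv_into (sdom A) f) (sdom B)) t \<in> rel A r"
    if "set t \<subseteq> sdom B" for r t
  proof -
    let ?t = "map (restrict (inv_into (sdom A) f) (sdom B)) t"
    have s: "set ?t \<subseteq> sdom A" using that im by auto
    have "\<forall>x\<in>set t. f (restrict (inv_into (sdom A) f) (sdom B) x) = x"
      using that bij f_inv_into_f[of _ f "sdom A"] by (auto simp: bij_betw_def)
    then have "map f ?t = t" by (induction t) auto
    moreover have "?t \<in> rel A r \<longleftrightarrow> map f ?t \<in> rel B r"
      using assms s unfolding is_iso_def is_emb_def by blast
    ultimately show ?thesis by simp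
  qed
  show ?thesis unfolding is_iso_def is_emb_def using i2 im rl by auto
qed

lemma emb_induced_mono:
  assumes "is_emb A (induced M X) f" "X \<subseteq> Y"
  shows "is_emb A (induced M Y) f"
proof -
  have h: "f \<in> extensional (sdom A)" "inj_on f (sdom A)" "f ` sdom A \<subseteq> X"
    and r: "\<forall>r t. set t \<subseteq> sdom A \<longrightarrow> (t \<in> rel A r \<longleftrightarrow> map f t \<in> rel (induced M X) r)"
    using assms(1)[unfolded is_emb_def sdom_induced] by - (elim conjE, assumption)+
  have r2: "t \<in> rel A r \<longleftrightarrow> map f t \<in> rel (induced M Y) r" if "set t \<subseteq> sdom A" for r t
  proof -
    have "set (map f t) \<subseteq> X" using that h(3) by auto
    then have "set (map f t) \<subseteq> Y" using assms(2) by blast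
    then show ?thesis using r that \<open>set (map f t) \<subseteq> X\<close> by simp
  qed
  show ?thesis unfolding is_emb_def
  proof (intro conjI allI impI)
    show "f \<in> extensional (sdom A)" "inj_on f (sdom A)" by (rule h(1), rule h(2))
    show "f ` sdom A \<subseteq> sdom (induced M Y)" using h(3) assms(2) by simp
    show "t \<in> rel A r \<longleftrightarrow> map f t \<in> rel (induced M Y) r" if "set t \<subseteq> sdom A" for r t
      by (rule r2[OF that])
  qed
qed

lemma sat_aut:
  assumes "is_iso M M \<sigma>"
  shows "\<forall>i. v i \<in> sdom M \<Longrightarrow> sat M (\<sigma> \<circ> v) \<phi> = sat M v \<phi>"
proof (induction \<phi> arbitrary: v)
  case (Eq i j)
  then show ?case using assms by (auto simp: is_iso_def is_emb_def inj_on_def)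
next
  case (Rel r xs)
  have "set (map v xs) \<subseteq> sdom M" using Rel by auto
  moreover have "map (\<sigma> \<circ> v) xs = map \<sigma> (map v xs)" by simp
  ultimately show ?case using assms unfolding is_iso_def is_emb_def sat.simps by metis
next
  case (Neg \<phi>)
  then show ?case by simp
next
  case (Conj \<phi>1 \<phi>2)
  then show ?case by simp
next
  case (Ex i \<phi>)
  have surj: "\<sigma> ` sdom M = sdom M" using assms by (simp add: is_iso_def)
  have e: "(\<sigma> \<circ> v)(i := \<sigma> b) = \<sigma> \<circ> (v(i := b))" for b by auto
  have sw: "(\<exists>a\<in>sdom M. Q a) \<longleftrightarrow> (\<exists>b\<in>sdom M. Q (\<sigma> b))" for Q
  proof
    assume "\<exists>a\<in>sdom M. Q a"
    then obtain a where a: "a \<in> sdom M" "Q a" by blast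
    then have "a \<in> \<sigma> ` sdom M" using surj by simp
    then obtain b where "b \<in> sdom M" "a = \<sigma> b" by (rule imageE)
    then show "\<exists>b\<in>sdom M. Q (\<sigma> b)" using a by blast
  next
    assume "\<exists>b\<in>sdom M. Q (\<sigma> b)"
    then obtain b where b: "b \<in> sdom M" "Q (\<sigma> b)" by blast
    then have "\<sigma> b \<in> sdom M" using surj by blast
    then show "\<exists>a\<in>sdom M. Q a" using b by blast
  qed
  have "(\<exists>a\<in>sdom M. sat M ((\<sigma> \<circ> v)(i := a)) \<phi>) \<longleftrightarrow> (\<exists>b\<in>sdom M. sat M ((\<sigma> \<circ> v)(i := \<sigma> b)) \<phi>)"
    by (rule sw)
  also have "\<dots> \<longleftrightarrow> (\<exists>b\<in>sdom M. sat M (v(i := b)) \<phi>)"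
  proof -
    have h: "sat M (\<sigma> \<circ> v(i:=b)) \<phi> = sat M (v(i:=b)) \<phi>" if "b \<in> sdom M" for b
    proof -
      have pr: "\<forall>j. (v(i:=b)) j \<in> sdom M" using Ex.prems that by auto
      show ?thesis by (rule Ex.IH[OF pr])
    qed
    show ?thesis unfolding e using h by blast
  qed
  finally show ?case by (simp only: sat.simps)
qed

lemma arcs_aut:
  assumes "is_iso M M \<sigma>" "(x, y) \<in> arcs M \<phi>"
  shows "(\<sigma> x, \<sigma> y) \<in> arcs M \<phi>"
proof -
  let ?v = "\<lambda>i::nat. if i = 0 then x else y"
  have xy: "x \<in> sdom M" "y \<in> sdom M" "sat M ?v \<phi>" using assms(2) by (auto simp: arcs_def)
  have "sat M (\<sigma> \<circ> ?v) \<phi>" using sat_aut[OF assms(1), of ?v] xy by auto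
  moreover have "\<sigma> \<circ> ?v = (\<lambda>i. if i = 0 then \<sigma> x else \<sigma> y)" by auto
  moreover have "\<sigma> x \<in> sdom M" "\<sigma> y \<in> sdom M" using assms(1) xy by (auto simp: is_iso_def)
  ultimately show ?thesis by (auto simp: arcs_def)
qed

lemma cyc_up:
  fixes f :: "nat \<Rightarrow> nat"
  assumes "vs \<noteq> []" "\<forall>i<length vs. f (vs!i) < f (vs!((i+1) mod length vs))"
  shows False
proof -
  let ?m = "Max (f ` set vs)"
  have "?m \<in> f ` set vs" using assms(1) by simp
  then obtain x where x: "x \<in> set vs" "f x = ?m" by auto
  then obtain i where i: "i < length vs" "vs!i = x" by (auto simp: in_set_conv_nth)
  have "vs!((i+1) mod length vs) \<in> set vs" using assms(1) by simp
  then have "f (vs!((i+1) mod length vs)) \<le> ?m" by simp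
  moreover have "f (vs!i) < f (vs!((i+1) mod length vs))" using assms(2) i(1) by blast
  ultimately show False using i(2) x(2) by simp
qed

lemma cyc_down:
  fixes f :: "nat \<Rightarrow> nat"
  assumes "vs \<noteq> []" "\<forall>i<length vs. f (vs!((i+1) mod length vs)) < f (vs!i)"
  shows False
proof -
  let ?m = "Min (f ` set vs)"
  have "?m \<in> f ` set vs" using assms(1) by simp
  then obtain x where x: "x \<in> set vs" "f x = ?m" by auto
  then obtain i where i: "i < length vs" "vs!i = x" by (auto simp: in_set_conv_nth)
  have "vs!((i+1) mod length vs) \<in> set vs" using assms(1) by simp
  then have "f (vs!((i+1) mod length vs)) \<ge> ?m" by simp
  moreover have "f (vs!((i+1) mod length vs)) < f (vs!i)" using assms(2) i(1) by blast
  ultimately show False using i(2) x(2) by simp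
qed



theorem mainTheorem7:
  fixes L :: "'r set" and ar :: "'r \<Rightarrow> nat" and K :: "'r struc set"
    and M A0 :: "'r struc" and \<phi> :: "'r fm" and vs :: "nat list"
  assumes "finite L"
    and "fraisse_class L ar K"
    and "\<forall>S \<in> K. rigid S"
    and "fraisse_limit L ar K M"
    and "A0 \<in> K" and "card (sdom A0) = 2"
    and "in_lang L ar \<phi>" and "fv \<phi> \<subseteq> {0, 1}"
    and "\<forall>x \<in> sdom M. \<forall>y \<in> sdom M. x \<noteq> y \<and> isomorphic (induced M {x, y}) A0 \<longrightarrow>
           ((x, y) \<in> arcs M \<phi> \<longleftrightarrow> (y, x) \<notin> arcs M \<phi>)"
    and "\<forall>(x, y) \<in> arcs M \<phi>. x \<noteq> y \<and> isomorphic (induced M {x, y}) A0"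
    and "vs \<noteq> []" and "distinct vs"
    and "\<forall>i < length vs. (vs ! i, vs ! ((i + 1) mod length vs)) \<in> arcs M \<phi>"
  shows "(\<forall>C \<in> K. \<exists>col :: (nat \<Rightarrow> nat) \<Rightarrow> bool.
            \<not> (\<exists>g. is_emb (induced M (set vs)) C g \<and>
                   monochromatic col A0 (induced M (set vs)) C g))
         \<and> \<not> ramsey_class K"
  proof -
  note a = assms
  define n where "n = length vs"
  define nx where "nx i = (i + 1) mod n" for i
  define P where "P i = {vs!i, vs!(nx i)}" for i
  define B where "B = induced M (set vs)"
  have n0: "0 < n" using a(11) by (simp add: n_def)
  have nxl: "nx i < n" for i using n0 by (simp add: nx_def)
  have arc: "(vs!i, vs!(nx i)) \<in> arcs M \<phi>" if "i < n" for i
    using a(13) that by (simp add: n_def nx_def)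
  have PM: "P i \<subseteq> sdom M" if "i < n" for i
    using arc[OF that] by (auto simp: arcs_def P_def)
  have Pvs: "P i \<subseteq> set vs" if "i < n" for i
    using that nxl[of i] by (auto simp: P_def n_def)
  have F1: "vs!i \<noteq> vs!(nx i) \<and> isomorphic (induced M (P i)) A0" if "i < n" for i
    using bspec[OF a(10) arc[OF that]] unfolding P_def by simp
  have "\<forall>i. \<exists>f. i < n \<longrightarrow> is_iso A0 (induced M (P i)) f"
  proof
    fix i show "\<exists>f. i < n \<longrightarrow> is_iso A0 (induced M (P i)) f"
    proof (cases "i < n")
      case True
      then obtain h where "is_iso (induced M (P i)) A0 h" using F1 by (auto simp: isomorphic_def)
      then show ?thesis using iso_inv by blast
    qed simp
  qed
  then obtain \<psi> where psi0: "\<forall>i. i < n \<longrightarrow> is_iso A0 (induced M (P i)) (\<psi> i)"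
    by (rule choice[THEN exE])
  have psi: "is_iso A0 (induced M (P i)) (\<psi> i)" if "i < n" for i
    using psi0 that by blast
  obtain a0 a1 where a01: "sdom A0 = {a0, a1}" "a0 \<noteq> a1"
    using a(6) by (auto simp: card_2_iff)
  have F3: "\<psi> i a0 \<in> P i \<and> \<psi> i a1 \<in> P i \<and> \<psi> i a0 \<noteq> \<psi> i a1" if "i < n" for i
    using psi[OF that] a01 by (auto simp: is_iso_def is_emb_def inj_on_def)
  have F3a: "\<psi> i a0 = vs!i \<Longrightarrow> \<psi> i a1 = vs!(nx i)" if "i < n" for i
    using F3[OF that] by (auto simp: P_def)
  have F3b: "\<psi> i a0 \<noteq> vs!i \<Longrightarrow> \<psi> i a0 = vs!(nx i) \<and> \<psi> i a1 = vs!i" if "i < n" for i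
    using F3[OF that] by (auto simp: P_def)
  have flim: "is_struc L ar M" "homogeneous M" "age L ar M = K"
    using a(4) unfolding fraisse_limit_def by blast+
  have hom: "homogeneous M" by (rule flim(2))
  have F4: "\<psi> j a0 = vs!j" if ij: "i < n" "j < n" and t: "\<psi> i a0 = vs!i" for i j
  proof -
    let ?\<chi> = "restrict (inv_into (sdom A0) (\<psi> i)) (P i)"
    have c: "is_iso (induced M (P i)) A0 ?\<chi>" using iso_inv[OF psi[OF ij(1)]] by (simp only: sdom_induced)
    let ?\<tau> = "restrict (\<psi> j \<circ> ?\<chi>) (P i)"
    have tau: "is_iso (induced M (P i)) (induced M (P j)) ?\<tau>"
      using iso_comp[OF c psi[OF ij(2)]] by (simp only: sdom_induced)
    have fin: "finite (P i)" "finite (P j)" by (simp_all add: P_def)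
    have "\<exists>g. is_iso M M g \<and> (\<forall>x \<in> P i. g x = ?\<tau> x)"
      by (rule hom[unfolded homogeneous_def, rule_format, of "P i" "P j"]) (intro conjI fin(1) fin(2) PM[OF ij(1)] PM[OF ij(2)] tau)
    then obtain \<sigma> where s: "is_iso M M \<sigma>" "\<forall>x \<in> P i. \<sigma> x = ?\<tau> x"
      by blast
    have inj: "inj_on (\<psi> i) (sdom A0)" using psi[OF ij(1)] by (simp add: is_iso_def is_emb_def)
    have sa: "\<sigma> (\<psi> i a) = \<psi> j a" if "a \<in> sdom A0" for a
    proof -
      have "\<psi> i a \<in> P i" using F3[OF ij(1)] a01 that by auto
      then show ?thesis using s(2) inv_into_f_f[OF inj that] by simp
    qed
    have "(\<sigma> (vs!i), \<sigma> (vs!(nx i))) \<in> arcs M \<phi>" using arcs_aut[OF s(1) arc[OF ij(1)]] .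
    moreover have "\<sigma> (vs!i) = \<psi> j a0" using sa[of a0] a01 t by simp
    moreover have "\<sigma> (vs!(nx i)) = \<psi> j a1" using sa[of a1] a01 F3a[OF ij(1) t] by simp
    ultimately have ar: "(\<psi> j a0, \<psi> j a1) \<in> arcs M \<phi>" by simp
    show ?thesis
    proof (rule ccontr)
      assume "\<psi> j a0 \<noteq> vs!j"
      then have e: "\<psi> j a0 = vs!(nx j) \<and> \<psi> j a1 = vs!j" using F3b[OF ij(2)] by blast
      have c1: "vs!j \<in> sdom M" "vs!(nx j) \<in> sdom M" using PM[OF ij(2)] by (auto simp: P_def)
      have c3: "isomorphic (induced M {vs!j, vs!(nx j)}) A0" "vs!j \<noteq> vs!(nx j)"
        using F1[OF ij(2)] by (auto simp: P_def)
      have "(vs!j, vs!(nx j)) \<in> arcs M \<phi> \<longleftrightarrow> (vs!(nx j), vs!j) \<notin> arcs M \<phi>"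
        using bspec[OF bspec[OF a(9) c1(1)] c1(2)] c3 by blast
      moreover have "(vs!(nx j), vs!j) \<in> arcs M \<phi>" using ar e by simp
      ultimately show False using arc[OF ij(2)] by blast
    qed
  qed
  have part1: "\<exists>col :: (nat \<Rightarrow> nat) \<Rightarrow> bool.
            \<not> (\<exists>g. is_emb (induced M (set vs)) C g \<and>
                   monochromatic col A0 (induced M (set vs)) C g)" if "C \<in> K" for C
  proof (intro exI notI)
    let ?col = "\<lambda>f::nat\<Rightarrow>nat. f a0 < f a1"
    assume "\<exists>g. is_emb (induced M (set vs)) C g \<and> monochromatic ?col A0 (induced M (set vs)) C g"
    then obtain g where g: "is_emb B C g" "monochromatic ?col A0 B C g" by (auto simp: B_def)
    define e where "e i = restrict (g \<circ> \<psi> i) (sdom A0)" for i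
    have ee: "is_emb A0 C (e i)" "e i ` sdom A0 \<subseteq> g ` sdom B" if "i < n" for i
    proof -
      have "is_emb A0 B (\<psi> i)" unfolding B_def
        using emb_induced_mono[OF _ Pvs[OF that]] psi[OF that] unfolding is_iso_def by blast
      then show "is_emb A0 C (e i)" using emb_comp g(1) by (simp add: e_def)
      show "e i ` sdom A0 \<subseteq> g ` sdom B"
        using psi[OF that] Pvs[OF that] by (auto simp: e_def B_def is_iso_def is_emb_def)
    qed
    have mono: "?col (e i) = ?col (e 0)" if "i < n" for i
      using g(2)[unfolded monochromatic_def, rule_format, of "e i" "e 0"] ee[OF that] ee[OF n0] by simp
    have ginj: "g (vs!i) \<noteq> g (vs!(nx i))" if "i < n" for i
      using g(1) F1[OF that] Pvs[OF that] by (auto simp: is_emb_def B_def P_def inj_on_def)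
    have all: "(\<psi> i a0 = vs!i) = (\<psi> 0 a0 = vs!0)" if "i < n" for i
      using F4[OF that n0] F4[OF n0 that] by blast
    have eab: "e i a0 = g (\<psi> i a0)" "e i a1 = g (\<psi> i a1)" for i
      using a01 by (auto simp: e_def)
    have key: "?col (e i) = (if \<psi> 0 a0 = vs!0 then g (vs!i) < g (vs!(nx i)) else g (vs!(nx i)) < g (vs!i))"
      if "i < n" for i
      using all[OF that] F3a[OF that] F3b[OF that] eab by auto
    show False
    proof (cases "?col (e 0) = (\<psi> 0 a0 = vs!0)")
      case True
      have "\<forall>i<length vs. g (vs!i) < g (vs!((i+1) mod length vs))"
      proof (intro allI impI)
        fix i assume "i < length vs"
        then have i: "i < n" by (simp add: n_def)
        show "g (vs!i) < g (vs!((i+1) mod length vs))"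
          using key[OF i] mono[OF i] True ginj[OF i] by (auto simp: nx_def n_def split: if_splits)
      qed
      then show False using cyc_up a(11) by blast
    next
      case False
      have "\<forall>i<length vs. g (vs!((i+1) mod length vs)) < g (vs!i)"
      proof (intro allI impI)
        fix i assume "i < length vs"
        then have i: "i < n" by (simp add: n_def)
        show "g (vs!((i+1) mod length vs)) < g (vs!i)"
          using key[OF i] mono[OF i] False ginj[OF i] by (auto simp: nx_def n_def split: if_splits)
      qed
      then show False using cyc_down a(11) by blast
    qed
  qed
  have BK: "B \<in> K"
  proof -
    have sM: "is_struc L ar M" by (rule flim(1))
    have vsM: "set vs \<subseteq> sdom M"
    proof
      fix x assume "x \<in> set vs"
      then obtain i where "i < n" "vs!i = x" by (auto simp: in_set_conv_nth n_def)
      then show "x \<in> sdom M" using PM by (auto simp: P_def)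
    qed
    have st: "is_struc L ar B" using sM by (auto simp: is_struc_def B_def)
    have fn: "fin_ne B" using a(11) by (simp add: fin_ne_def B_def)
    have iso: "isomorphic B (induced M (set vs))"
    proof -
      have idm: "map (restrict id (set vs)) t = t" if "set t \<subseteq> set vs" for t
        using that by (induction t) auto
      show ?thesis
        unfolding isomorphic_def is_iso_def is_emb_def B_def
        by (rule exI[of _ "restrict id (set vs)"]) (simp add: idm inj_on_def)
    qed
    have "set vs \<noteq> {}" using a(11) by simp
    then have "B \<in> age L ar M" using st fn iso vsM unfolding age_def mem_Collect_eq
      by (intro conjI exI[of _ "set vs"]) simp_all
    then show ?thesis unfolding flim(3) .
  qed
  have "\<not> ramsey_class K"
  proof
    assume "ramsey_class K"
    then have R: "\<forall>A \<in> K. \<forall>B \<in> K. \<exists>C \<in> K. \<forall>col :: (nat \<Rightarrow> nat) \<Rightarrow> bool.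
        \<exists>g. is_emb B C g \<and> monochromatic col A B C g" unfolding ramsey_class_def .
    have "\<exists>C\<in>K. \<forall>col :: (nat \<Rightarrow> nat) \<Rightarrow> bool. \<exists>g. is_emb B C g \<and> monochromatic col A0 B C g"
      by (rule bspec[OF bspec[OF R a(5)] BK])
    then obtain C where C: "C \<in> K" "\<forall>col :: (nat \<Rightarrow> nat) \<Rightarrow> bool. \<exists>g. is_emb B C g \<and> monochromatic col A0 B C g"
      by (elim bexE) simp
    obtain col where "\<not> (\<exists>g. is_emb B C g \<and> monochromatic col A0 B C g)"
      using part1[OF C(1)] unfolding B_def[symmetric] by (elim exE) simp
    then show False using C(2) by simp
  qed
  then show ?thesis using part1 by (intro conjI ballI) simp_all
qed

end
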